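(* Let $G$ be a group, $H\le G$, $S$ a right transversal of $H$ in $G$ with induced right loop operation $\circ$, and for $x\in S$, $h\in H$ let $x\theta h$ denote the unique element of $S\cap Hxh$. Let $U$ be a congruence on $(S,\circ)$ with $\{(x,x\theta h): h\in H, x\in S\}\subseteq U$, and let $T$ be the $U$-class of $1$. Then $S/U$ is a group, $N=HT$ is a normal subgroup of $G=HS$, $H\le N$, $N\cap S=T$, and $G/N\cong S/U$.
   Context: For a subgroup $H$ of a group $G$, a right transversal $S$ is a subset containing exactly one element of each right coset $Hg$, with $1\in S$; then $G=HS$. The induced operation: $x\circ y$ is the unique element of $S\cap Hxy$; $(S,\circ)$ is a right loop (two-sided identity, unique solutions of $X\circ a=b$). A congruence on a right loop $S$ is an equivalence relation on $S$ that is a right subloop of $S\times S$ (componentwise operation); if $T$ is the class of $1$, the classes are $T\circ x$ and $S/U=\{T\circ x\}$ has operation $(T\circ x)\circ(T\circ y)=T\circ(x\circ y)$. *)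

theory Defs
  imports "HOL-Algebra.Algebra"
begin

definition right_transversal :: "('a, 'b) monoid_scheme \<Rightarrow> 'a set \<Rightarrow> 'a set \<Rightarrow> bool" where
  "right_transversal G H S \<longleftrightarrow>
     S \<subseteq> carrier G \<and> \<one>\<^bsub>G\<^esub> \<in> S \<and>
     (\<forall>C \<in> rcosets\<^bsub>G\<^esub> H. \<exists>!s. s \<in> S \<inter> C)"

definition tr_op :: "('a, 'b) monoid_scheme \<Rightarrow> 'a set \<Rightarrow> 'a set \<Rightarrow> 'a \<Rightarrow> 'a \<Rightarrow> 'a" where
  "tr_op G H S x y = (THE z. z \<in> S \<inter> (H #>\<^bsub>G\<^esub> (x \<otimes>\<^bsub>G\<^esub> y)))"

definition tr_theta :: "('a, 'b) monoid_scheme \<Rightarrow> 'a set \<Rightarrow> 'a set \<Rightarrow> 'a \<Rightarrow> 'a \<Rightarrow> 'a" where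
  "tr_theta G H S x h = (THE z. z \<in> S \<inter> (H #>\<^bsub>G\<^esub> (x \<otimes>\<^bsub>G\<^esub> h)))"

definition tr_rdiv :: "('a, 'b) monoid_scheme \<Rightarrow> 'a set \<Rightarrow> 'a set \<Rightarrow> 'a \<Rightarrow> 'a \<Rightarrow> 'a" where
  "tr_rdiv G H S b a = (THE x. x \<in> S \<and> tr_op G H S x a = b)"

text \<open>A congruence on the right loop (S, o): an equivalence relation on S which is a
  right subloop of S \<times> S with componentwise operation (contains the identity,
  closed under the operation and under right division).\<close>
definition loop_congruence :: "('a, 'b) monoid_scheme \<Rightarrow> 'a set \<Rightarrow> 'a set \<Rightarrow> ('a \<times> 'a) set \<Rightarrow> bool" where
  "loop_congruence G H S U \<longleftrightarrow>
     equiv S U \<and>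
     (\<one>\<^bsub>G\<^esub>, \<one>\<^bsub>G\<^esub>) \<in> U \<and>
     (\<forall>a a' b b'. (a, a') \<in> U \<longrightarrow> (b, b') \<in> U \<longrightarrow>
        (tr_op G H S a b, tr_op G H S a' b') \<in> U) \<and>
     (\<forall>a a' b b'. (a, a') \<in> U \<longrightarrow> (b, b') \<in> U \<longrightarrow>
        (tr_rdiv G H S b a, tr_rdiv G H S b' a') \<in> U)"

definition loop_quotient :: "('a, 'b) monoid_scheme \<Rightarrow> 'a set \<Rightarrow> 'a set \<Rightarrow> ('a \<times> 'a) set \<Rightarrow> 'a set monoid" where
  "loop_quotient G H S U =
     \<lparr> carrier = S // U,
       monoid.mult = (\<lambda>A B. U `` {tr_op G H S (SOME x. x \<in> A) (SOME y. y \<in> B)}),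
       one = U `` {\<one>\<^bsub>G\<^esub>} \<rparr>"

end

theory Submission
  imports Defs
begin

lemma main_aux:
  fixes G :: "('a, 'b) monoid_scheme" (structure) and H S :: "'a set" and U :: "('a \<times> 'a) set"
  assumes "group G"
    and "subgroup H G"
    and "right_transversal G H S"
    and "loop_congruence G H S U"
    and "{(x, tr_theta G H S x h) | x h. h \<in> H \<and> x \<in> S} \<subseteq> U"
  shows "group (loop_quotient G H S U)
         \<and> H <#>\<^bsub>G\<^esub> (U `` {\<one>\<^bsub>G\<^esub>}) \<lhd> G
         \<and> H \<subseteq> H <#>\<^bsub>G\<^esub> (U `` {\<one>\<^bsub>G\<^esub>})
         \<and> (H <#>\<^bsub>G\<^esub> (U `` {\<one>\<^bsub>G\<^esub>})) \<inter> S = U `` {\<one>\<^bsub>G\<^esub>}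
         \<and> G Mod (H <#>\<^bsub>G\<^esub> (U `` {\<one>\<^bsub>G\<^esub>})) \<cong> loop_quotient G H S U"
proof -
  interpret group G by fact
  have sg: "subgroup H G" by fact
  have Hc: "H \<subseteq> carrier G" using sg subgroup.subset by blast
  have tr: "S \<subseteq> carrier G" "\<one> \<in> S" "\<And>C. C \<in> rcosets H \<Longrightarrow> \<exists>!s. s \<in> S \<inter> C"
    using assms(3) unfolding right_transversal_def by auto
  have eqU: "equiv S U" and opU: "\<And>a a' b b'. (a, a') \<in> U \<Longrightarrow> (b, b') \<in> U \<Longrightarrow>
        (tr_op G H S a b, tr_op G H S a' b') \<in> U"
    using assms(4) unfolding loop_congruence_def by auto
  have thU: "\<And>x h. x \<in> S \<Longrightarrow> h \<in> H \<Longrightarrow> (x, tr_theta G H S x h) \<in> U"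
    using assms(5) by blast
  define rep where "rep g = (THE s. s \<in> S \<inter> (H #> g))" for g
  have rep1: "rep g \<in> S \<and> rep g \<in> H #> g" if "g \<in> carrier G" for g
  proof -
    have "H #> g \<in> rcosets H" using that unfolding RCOSETS_def by auto
    from theI'[OF tr(3)[OF this]] show ?thesis unfolding rep_def by auto
  qed
  have repu: "rep g = s" if "g \<in> carrier G" "s \<in> S" "s \<in> H #> g" for g s
  proof -
    have "H #> g \<in> rcosets H" using that unfolding RCOSETS_def by auto
    from the1_equality[OF tr(3)[OF this]] that show ?thesis unfolding rep_def by auto
  qed
  have repS: "rep s = s" if "s \<in> S" for s
    using repu[of s s] that tr(1) rcos_self[OF _ sg] by auto
  have repH: "rep (h \<otimes> g) = rep g" if "h \<in> H" "g \<in> carrier G" for h g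
  proof -
    have hg: "h \<otimes> g \<in> H #> g" using that unfolding r_coset_def by auto
    have c: "h \<otimes> g \<in> carrier G" using that Hc by auto
    have "H #> g = H #> (h \<otimes> g)" using repr_independence[OF hg that(2) sg] .
    then show ?thesis using repu[OF c] rep1[OF that(2)] by auto
  qed
  have decomp: "\<exists>h\<in>H. g = h \<otimes> rep g" if "g \<in> carrier G" for g
  proof -
    have r: "rep g \<in> H #> g" "rep g \<in> carrier G" using rep1[OF that] tr(1) by auto
    have "H #> g = H #> rep g" using repr_independence[OF r(1) that sg] .
    then have "g \<in> H #> rep g" using rcos_self[OF that sg] by simp
    then show ?thesis unfolding r_coset_def by auto
  qed
  have repL: "rep (x \<otimes> y) = rep (rep x \<otimes> y)" if xy: "x \<in> carrier G" "y \<in> carrier G" for x y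
  proof -
    obtain h where h: "h \<in> H" "x = h \<otimes> rep x" using decomp[OF xy(1)] by blast
    have rc: "rep x \<in> carrier G" using rep1[OF xy(1)] tr(1) by auto
    have "x \<otimes> y = h \<otimes> (rep x \<otimes> y)" proof -
      have hc: "h \<in> carrier G" using h(1) Hc by auto
      show ?thesis by (metis h(2) m_assoc hc rc xy(2))
    qed
    moreover have "rep (h \<otimes> (rep x \<otimes> y)) = rep (rep x \<otimes> y)"
      by (rule repH[OF h(1)]) (use rc xy in auto)
    ultimately show ?thesis by simp
  qed
  have opdef: "tr_op G H S x y = rep (x \<otimes> y)" for x y unfolding tr_op_def rep_def by simp
  have thdef: "tr_theta G H S x y = rep (x \<otimes> y)" for x y unfolding tr_theta_def rep_def by simp
  define Q where "Q = loop_quotient G H S U"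
  define phi where "phi g = U `` {rep g}" for g
  have Qc: "carrier Q = S // U" and Qone: "\<one>\<^bsub>Q\<^esub> = U `` {\<one>}"
    and Qm: "\<And>A B. A \<otimes>\<^bsub>Q\<^esub> B = U `` {tr_op G H S (SOME x. x \<in> A) (SOME y. y \<in> B)}"
    unfolding Q_def loop_quotient_def by auto
  have Usub: "U \<subseteq> S \<times> S" using eqU unfolding equiv_def refl_on_def by blast
  have classeq: "U `` {a} = U `` {b} \<longleftrightarrow> (a, b) \<in> U" if "a \<in> S" "b \<in> S" for a b
    using eq_equiv_class_iff[OF eqU that] .
  have phic: "phi g \<in> carrier Q" if "g \<in> carrier G" for g
    using rep1[OF that] unfolding phi_def Qc quotient_def by auto
  have phimult: "phi (g1 \<otimes> g2) = phi g1 \<otimes>\<^bsub>Q\<^esub> phi g2" if g: "g1 \<in> carrier G" "g2 \<in> carrier G" for g1 g2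
  proof -
    define s1 where "s1 = rep g1"
    define s2 where "s2 = rep g2"
    have s: "s1 \<in> S" "s2 \<in> S" using rep1 g s1_def s2_def by auto
    have sc: "s1 \<in> carrier G" "s2 \<in> carrier G" using s tr(1) by auto
    obtain h2 where h2: "h2 \<in> H" "g2 = h2 \<otimes> s2" using decomp[OF g(2)] s2_def by blast
    have h2c: "h2 \<in> carrier G" using h2 Hc by auto
    define t where "t = tr_theta G H S s1 h2"
    have tS: "t \<in> S" using rep1[of "s1 \<otimes> h2"] sc h2c unfolding t_def thdef by auto
    have "rep (g1 \<otimes> g2) = rep (s1 \<otimes> g2)" using repL g s1_def by simp
    also have "\<dots> = rep ((s1 \<otimes> h2) \<otimes> s2)" using h2 sc h2c by (simp add: m_assoc)
    also have "\<dots> = rep (rep (s1 \<otimes> h2) \<otimes> s2)" using repL sc h2c by simp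
    also have "\<dots> = tr_op G H S t s2" unfolding t_def thdef opdef ..
    finally have e: "rep (g1 \<otimes> g2) = tr_op G H S t s2" .
    define a where "a = (SOME x. x \<in> phi g1)"
    define b where "b = (SOME x. x \<in> phi g2)"
    have "s1 \<in> phi g1" "s2 \<in> phi g2" using s eqU unfolding phi_def s1_def s2_def
      by (auto simp: equiv_def refl_on_def)
    then have "a \<in> phi g1" "b \<in> phi g2" unfolding a_def b_def by (metis someI)+
    then have sa: "(s1, a) \<in> U" and sb: "(s2, b) \<in> U" unfolding phi_def s1_def s2_def by auto
    have "(t, s1) \<in> U" using thU[OF s(1) h2(1)] eqU unfolding t_def equiv_def sym_def by blast
    then have "(t, a) \<in> U" using sa eqU unfolding equiv_def trans_def by blast
    then have tab: "(tr_op G H S t s2, tr_op G H S a b) \<in> U" using opU sb by blast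
    have "phi (g1 \<otimes> g2) = U `` {tr_op G H S a b}"
      unfolding phi_def e using tab Usub classeq by blast
    then show ?thesis unfolding Qm a_def b_def by simp
  qed
  have phisurj: "phi ` carrier G = carrier Q"
  proof
    show "phi ` carrier G \<subseteq> carrier Q" using phic by auto
    show "carrier Q \<subseteq> phi ` carrier G"
    proof
      fix A assume "A \<in> carrier Q"
      then obtain s where s: "s \<in> S" "A = U `` {s}" unfolding Qc quotient_def by auto
      then have "A = phi s" unfolding phi_def using repS by simp
      then show "A \<in> phi ` carrier G" using s tr(1) by auto
    qed
  qed
  have phione: "phi \<one> = \<one>\<^bsub>Q\<^esub>" unfolding phi_def Qone using repS tr(2) by simp
  have grpQ: "group Q"
  proof (rule groupI)
    fix x y assume "x \<in> carrier Q" "y \<in> carrier Q"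
    then have "x \<in> phi ` carrier G" "y \<in> phi ` carrier G" using phisurj by auto
    then obtain a b where ab: "a \<in> carrier G" "b \<in> carrier G" "x = phi a" "y = phi b"
      by blast
    then have "x \<otimes>\<^bsub>Q\<^esub> y = phi (a \<otimes> b)" using phimult by simp
    then show "x \<otimes>\<^bsub>Q\<^esub> y \<in> carrier Q" using phic ab by simp
  next
    show "\<one>\<^bsub>Q\<^esub> \<in> carrier Q" using phione phic[of \<one>] by simp
  next
    fix x y z assume "x \<in> carrier Q" "y \<in> carrier Q" "z \<in> carrier Q"
    then have "x \<in> phi ` carrier G" "y \<in> phi ` carrier G" "z \<in> phi ` carrier G"
      using phisurj by auto
    then obtain a b c where abc: "a \<in> carrier G" "b \<in> carrier G" "c \<in> carrier G"
      "x = phi a" "y = phi b" "z = phi c"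
      by blast
    have "x \<otimes>\<^bsub>Q\<^esub> y \<otimes>\<^bsub>Q\<^esub> z = phi (a \<otimes> b \<otimes> c)"
      using abc phimult by simp
    moreover have "x \<otimes>\<^bsub>Q\<^esub> (y \<otimes>\<^bsub>Q\<^esub> z) = phi (a \<otimes> (b \<otimes> c))"
      using abc phimult by simp
    ultimately show "x \<otimes>\<^bsub>Q\<^esub> y \<otimes>\<^bsub>Q\<^esub> z = x \<otimes>\<^bsub>Q\<^esub> (y \<otimes>\<^bsub>Q\<^esub> z)"
      using abc by (simp add: m_assoc)
  next
    fix x assume "x \<in> carrier Q"
    then have "x \<in> phi ` carrier G" using phisurj by auto
    then obtain a where a: "a \<in> carrier G" "x = phi a" by blast
    have "\<one>\<^bsub>Q\<^esub> \<otimes>\<^bsub>Q\<^esub> x = phi (\<one> \<otimes> a)" using a phimult[of \<one> a] phione by simp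
    then show "\<one>\<^bsub>Q\<^esub> \<otimes>\<^bsub>Q\<^esub> x = x" using a by simp
    have "phi (inv a) \<otimes>\<^bsub>Q\<^esub> x = phi (inv a \<otimes> a)" using a phimult[of "inv a" a] by simp
    then have "phi (inv a) \<otimes>\<^bsub>Q\<^esub> x = \<one>\<^bsub>Q\<^esub>" using a phione by simp
    then show "\<exists>y\<in>carrier Q. y \<otimes>\<^bsub>Q\<^esub> x = \<one>\<^bsub>Q\<^esub>"
      using a phic[of "inv a"] by blast
  qed
  have hom: "phi \<in> hom G Q" unfolding hom_def using phic phimult by auto
  interpret gh: group_hom G Q phi
    using grpQ hom by (simp add: group_hom_def group_hom_axioms_def is_group)
  define T where "T = U `` {\<one>}"
  have TS: "T \<subseteq> S" using Usub unfolding T_def by auto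
  have oneT: "\<one> \<in> T" using eqU tr(2) unfolding T_def equiv_def refl_on_def by auto
  have ker: "kernel G Q phi = H <#> T"
  proof
    show "kernel G Q phi \<subseteq> H <#> T"
    proof
      fix g assume "g \<in> kernel G Q phi"
      then have g: "g \<in> carrier G" "U `` {rep g} = U `` {\<one>}"
        unfolding kernel_def phi_def Qone by auto
      then have "(rep g, \<one>) \<in> U" using classeq rep1 tr(2) by blast
      then have "rep g \<in> T" using eqU unfolding T_def equiv_def sym_def by blast
      moreover obtain h where "h \<in> H" "g = h \<otimes> rep g" using decomp[OF g(1)] by blast
      ultimately show "g \<in> H <#> T" unfolding set_mult_def by auto
    qed
    show "H <#> T \<subseteq> kernel G Q phi"
    proof
      fix g assume "g \<in> H <#> T"
      then obtain h t where ht: "h \<in> H" "t \<in> T" "g = h \<otimes> t" unfolding set_mult_def by auto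
      have tS: "t \<in> S" using ht TS by auto
      then have tc: "t \<in> carrier G" using tr(1) by auto
      have "rep g = t" using repH[OF ht(1) tc] repS[OF tS] ht by simp
      moreover have "(\<one>, t) \<in> U" using ht unfolding T_def by auto
      ultimately have "phi g = U `` {\<one>}" unfolding phi_def using classeq tS tr(2) by blast
      moreover have "g \<in> carrier G" using ht tc Hc by auto
      ultimately show "g \<in> kernel G Q phi" unfolding kernel_def Qone by auto
    qed
  qed
  have n: "H <#> T \<lhd> G" using gh.normal_kernel ker by simp
  have sub: "H \<subseteq> H <#> T"
  proof
    fix h assume "h \<in> H"
    then have "h = h \<otimes> \<one>" using Hc by auto
    then show "h \<in> H <#> T" using \<open>h \<in> H\<close> oneT unfolding set_mult_def by blast
  qed
  have cap: "(H <#> T) \<inter> S = T"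
  proof
    show "(H <#> T) \<inter> S \<subseteq> T"
    proof
      fix s assume "s \<in> (H <#> T) \<inter> S"
      then obtain h t where ht: "h \<in> H" "t \<in> T" "s = h \<otimes> t" "s \<in> S" unfolding set_mult_def by auto
      have tS: "t \<in> S" using ht TS by auto
      have tc: "t \<in> carrier G" using tS tr(1) by auto
      have "rep s = rep (h \<otimes> t)" using ht by simp
      also have "\<dots> = rep t" using repH[OF ht(1) tc] .
      also have "\<dots> = t" using repS[OF tS] .
      finally have "rep s = t" .
      then show "s \<in> T" using repS[OF ht(4)] ht(2) by simp
    qed
    show "T \<subseteq> (H <#> T) \<inter> S"
    proof
      fix t assume t: "t \<in> T"
      then have "t = \<one> \<otimes> t" using TS tr(1) by auto
      then show "t \<in> (H <#> T) \<inter> S" using t TS subgroup.one_closed[OF sg]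
        unfolding set_mult_def by blast
    qed
  qed
  have iso: "G Mod (H <#> T) \<cong> Q" using gh.FactGroup_iso[OF phisurj] ker by simp
  show ?thesis using grpQ n sub cap iso unfolding Q_def T_def by blast
qed


theorem mainTheorem8:
  fixes G :: "('a, 'b) monoid_scheme" and H S :: "'a set" and U :: "('a \<times> 'a) set"
  assumes "group G"
    and "subgroup H G"
    and "right_transversal G H S"
    and "loop_congruence G H S U"
    and "{(x, tr_theta G H S x h) | x h. h \<in> H \<and> x \<in> S} \<subseteq> U"
  shows "group (loop_quotient G H S U)
         \<and> H <#>\<^bsub>G\<^esub> (U `` {\<one>\<^bsub>G\<^esub>}) \<lhd> G
         \<and> H \<subseteq> H <#>\<^bsub>G\<^esub> (U `` {\<one>\<^bsub>G\<^esub>})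
         \<and> (H <#>\<^bsub>G\<^esub> (U `` {\<one>\<^bsub>G\<^esub>})) \<inter> S = U `` {\<one>\<^bsub>G\<^esub>}
         \<and> G Mod (H <#>\<^bsub>G\<^esub> (U `` {\<one>\<^bsub>G\<^esub>})) \<cong> loop_quotient G H S U"
  using main_aux[OF assms] .

end
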